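(* Let $X$ be a topological space and $x\in X$. Then $nu(X)\ge\left|\bigcup\{M: M$ is a maximal finitely non-Hausdorff subset of $X$ with $x\in M\}\right|$.
   Context: A non-empty subset $A$ of $X$ is finitely non-Hausdorff if for every non-empty finite $F\subseteq A$ and every family $\{U_y:y\in F\}$ of open neighborhoods $U_y$ of $y$, $\bigcap_{y\in F}U_y\neq\emptyset$; it is maximal finitely non-Hausdorff if no finitely non-Hausdorff subset of $X$ properly contains it. $A$ is finitely non-Urysohn if instead $\bigcap_{y\in F}\overline{U_y}\neq\emptyset$ for all such $F$ and families. The non-Urysohn number is $nu(X):=1+\sup\{|A|:A\subseteq X$ finitely non-Urysohn$\}$. *)

theory Defs
  imports "HOL-Analysis.Analysis"
begin

definition fin_non_hausdorff :: "'a topology \<Rightarrow> 'a set \<Rightarrow> bool" where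
  "fin_non_hausdorff X A \<longleftrightarrow> A \<noteq> {} \<and> A \<subseteq> topspace X \<and>
     (\<forall>F U. finite F \<and> F \<noteq> {} \<and> F \<subseteq> A \<and> (\<forall>y\<in>F. openin X (U y) \<and> y \<in> U y)
        \<longrightarrow> (\<Inter>y\<in>F. U y) \<noteq> {})"

definition max_fin_non_hausdorff :: "'a topology \<Rightarrow> 'a set \<Rightarrow> bool" where
  "max_fin_non_hausdorff X A \<longleftrightarrow> fin_non_hausdorff X A \<and>
     (\<forall>B. fin_non_hausdorff X B \<and> A \<subseteq> B \<longrightarrow> B = A)"

definition fin_non_urysohn :: "'a topology \<Rightarrow> 'a set \<Rightarrow> bool" where
  "fin_non_urysohn X A \<longleftrightarrow> A \<noteq> {} \<and> A \<subseteq> topspace X \<and>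
     (\<forall>F U. finite F \<and> F \<noteq> {} \<and> F \<subseteq> A \<and> (\<forall>y\<in>F. openin X (U y) \<and> y \<in> U y)
        \<longrightarrow> (\<Inter>y\<in>F. X closure_of (U y)) \<noteq> {})"

text \<open>C represents the cardinal sup{|A| : A finitely non-Urysohn}: |C| is an upper bound and
is below every upper bound of the form |D| with D a set of points (the supremum is at most
the cardinality of the space, hence representable this way).\<close>
definition is_sup_fnu :: "'a topology \<Rightarrow> 'a set \<Rightarrow> bool" where
  "is_sup_fnu X C \<longleftrightarrow> (\<forall>A. fin_non_urysohn X A \<longrightarrow> (card_of A, card_of C) \<in> ordLeq) \<and>
     (\<forall>D::'a set. (\<forall>A. fin_non_urysohn X A \<longrightarrow> (card_of A, card_of D) \<in> ordLeq) \<longrightarrow> (card_of C, card_of D) \<in> ordLeq)"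

text \<open>The non-Urysohn number nu(X) = 1 + sup{...}, as a cardinal (the cardinality of the
disjoint union of one extra point with a set of size sup{...}).\<close>
definition nu :: "'a topology \<Rightarrow> 'a option rel" where
  "nu X = card_of (insert None (Some ` (SOME C. is_sup_fnu X C)))"

end

theory Submission
  imports Defs
begin

lemma sup_exists: "\<exists>C. is_sup_fnu X C"
proof -
  let ?ub = "\<lambda>D::'a set. \<forall>A. fin_non_urysohn X A \<longrightarrow> (card_of A, card_of D) \<in> ordLeq"
  have wf: "wf (inv_image ordLess card_of :: ('a set \<times> 'a set) set)"
    using wf_ordLess by (rule wf_inv_image)
  have "?ub UNIV" by (auto intro: card_of_mono1)
  then obtain D0 where D0: "D0 \<in> {D. ?ub D}"
    and m: "\<And>D. (D, D0) \<in> inv_image ordLess card_of \<Longrightarrow> D \<notin> {D. ?ub D}"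
    using wf_eq_minimal[THEN iffD1, OF wf, rule_format, of _ "{D. ?ub D}"] by blast
  have "is_sup_fnu X D0"
    unfolding is_sup_fnu_def
  proof (intro conjI allI impI)
    fix A assume "fin_non_urysohn X A" then show "(card_of A, card_of D0) \<in> ordLeq" using D0 by auto
  next
    fix D assume "?ub D"
    then have "(card_of D, card_of D0) \<notin> ordLess" using m by auto
    then show "(card_of D0, card_of D) \<in> ordLeq"
      using not_ordLess_ordLeq ordLeq_total card_of_Card_order
      by (metis card_of_Well_order not_ordLeq_iff_ordLess)
  qed
  then show ?thesis by blast
qed

theorem corollary2p18:
  fixes X :: "'a topology" and x :: 'a
  assumes "x \<in> topspace X"
  shows "(card_of (\<Union>{M. max_fin_non_hausdorff X M \<and> x \<in> M}), nu X) \<in> ordLeq"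
proof -
  define U where "U = \<Union>{M. max_fin_non_hausdorff X M \<and> x \<in> M}"
  define C where "C = (SOME C. is_sup_fnu X C)"
  have C: "is_sup_fnu X C" unfolding C_def using sup_exists by (rule someI_ex)
  have UC: "(card_of U, card_of C) \<in> ordLeq"
  proof (cases "U = {}")
    case True then show ?thesis by (simp add: card_of_empty)
  next
    case False
    have "fin_non_urysohn X U"
      unfolding fin_non_urysohn_def
    proof (intro conjI allI impI)
      show "U \<noteq> {}" by fact
      show "U \<subseteq> topspace X" unfolding U_def max_fin_non_hausdorff_def fin_non_hausdorff_def by blast
    next
      fix F V assume h: "finite F \<and> F \<noteq> {} \<and> F \<subseteq> U \<and> (\<forall>y\<in>F. openin X (V y) \<and> y \<in> V y)"
      have "x \<in> X closure_of (V y)" if y: "y \<in> F" for y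
      proof -
        from y h obtain M where M: "max_fin_non_hausdorff X M" "x \<in> M" "y \<in> M"
          unfolding U_def by blast
        have fM: "fin_non_hausdorff X M" using M(1) max_fin_non_hausdorff_def by blast
        show ?thesis unfolding closure_of_def
        proof (safe)
          show "x \<in> topspace X" by fact
        next
          fix T assume T: "x \<in> T" "openin X T"
          define W where "W = (\<lambda>z. if z = x then T else V y)"
          have "(\<Inter>z\<in>{x,y}. W z) \<noteq> {}"
            using fM unfolding fin_non_hausdorff_def
            apply (elim conjE)
            apply (erule allE[of _ "{x,y}"], erule allE[of _ W])
            using M T h y unfolding W_def by auto
          then show "\<exists>z\<in>V y. z \<in> T"
          proof (cases "y = x")
            case True then show ?thesis using T h y by blast
          next
            case False then show ?thesis using \<open>(\<Inter>z\<in>{x,y}. W z) \<noteq> {}\<close> unfolding W_def by auto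
          qed
        qed
      qed
      then show "(\<Inter>y\<in>F. X closure_of V y) \<noteq> {}" using h by blast
    qed
    then show ?thesis using C unfolding is_sup_fnu_def by blast
  qed
  have "(card_of C, card_of (insert None (Some ` C))) \<in> ordLeq"
    by (rule card_of_ordLeq[THEN iffD1], rule exI[of _ Some]) auto
  then show ?thesis using UC unfolding nu_def C_def[symmetric] U_def[symmetric]
    using ordLeq_transitive by blast
qed

end
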